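(* Let $n\in\mathbb N$. Then there exist $k\in\mathbb N$ and a unital ${}^\ast$-homomorphism $Z_{n,n+1}\to Z_{2^k,2^k+1}$.
   Context: For natural numbers $p,q$, $Z_{p,q}=\{f\in C([0,1],M_p\otimes M_q): f(0)\in M_p\otimes1_q,\ f(1)\in1_p\otimes M_q\}$. *)

theory Defs
  imports "HOL-Analysis.Analysis"
begin

text \<open>Matrices in M_p \<otimes> M_q = M_{pq} are represented as complex-valued functions on
 pairs of tensor indices (i,j), i<p, j<q, vanishing outside the index set.
 Elements of C([0,1], M_p \<otimes> M_q) are functions real \<Rightarrow> matrix, vanishing outside [0,1]
 (canonical representatives), continuous on [0,1] (entrywise, equivalently in norm).\<close>

type_synonym tmat = "nat \<times> nat \<Rightarrow> nat \<times> nat \<Rightarrow> complex"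
type_synonym tfun = "real \<Rightarrow> tmat"

definition tidx :: "nat \<Rightarrow> nat \<Rightarrow> (nat \<times> nat) set" where
  "tidx p q = {..<p} \<times> {..<q}"

definition is_tmat :: "nat \<Rightarrow> nat \<Rightarrow> tmat \<Rightarrow> bool" where
  "is_tmat p q A \<longleftrightarrow> (\<forall>a b. (a \<notin> tidx p q \<or> b \<notin> tidx p q) \<longrightarrow> A a b = 0)"

definition in_left :: "nat \<Rightarrow> nat \<Rightarrow> tmat \<Rightarrow> bool" where
  "in_left p q A \<longleftrightarrow> (\<exists>M :: nat \<Rightarrow> nat \<Rightarrow> complex. \<forall>i j i' j'.
      i < p \<longrightarrow> j < q \<longrightarrow> i' < p \<longrightarrow> j' < q \<longrightarrow>
      A (i,j) (i',j') = M i i' * (if j = j' then 1 else 0))"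

definition in_right :: "nat \<Rightarrow> nat \<Rightarrow> tmat \<Rightarrow> bool" where
  "in_right p q A \<longleftrightarrow> (\<exists>M :: nat \<Rightarrow> nat \<Rightarrow> complex. \<forall>i j i' j'.
      i < p \<longrightarrow> j < q \<longrightarrow> i' < p \<longrightarrow> j' < q \<longrightarrow>
      A (i,j) (i',j') = (if i = i' then 1 else 0) * M j j')"

definition Zalg :: "nat \<Rightarrow> nat \<Rightarrow> tfun set" where
  "Zalg p q = {f. (\<forall>t. is_tmat p q (f t))
      \<and> (\<forall>t. t \<notin> {0..1} \<longrightarrow> f t = (\<lambda>_ _. 0))
      \<and> (\<forall>a b. continuous_on {0..1} (\<lambda>t. f t a b))
      \<and> in_left p q (f 0) \<and> in_right p q (f 1)}"

definition zadd :: "tfun \<Rightarrow> tfun \<Rightarrow> tfun" where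
  "zadd f g = (\<lambda>t a b. f t a b + g t a b)"

definition zscale :: "complex \<Rightarrow> tfun \<Rightarrow> tfun" where
  "zscale c f = (\<lambda>t a b. c * f t a b)"

definition zmult :: "nat \<Rightarrow> nat \<Rightarrow> tfun \<Rightarrow> tfun \<Rightarrow> tfun" where
  "zmult p q f g = (\<lambda>t a b. \<Sum>c\<in>tidx p q. f t a c * g t c b)"

definition zadj :: "tfun \<Rightarrow> tfun" where
  "zadj f = (\<lambda>t a b. cnj (f t b a))"

definition zunit :: "nat \<Rightarrow> nat \<Rightarrow> tfun" where
  "zunit p q = (\<lambda>t a b. if t \<in> {0..1} \<and> a \<in> tidx p q \<and> a = b then 1 else 0)"

definition unital_star_hom :: "nat \<Rightarrow> nat \<Rightarrow> nat \<Rightarrow> nat \<Rightarrow> (tfun \<Rightarrow> tfun) \<Rightarrow> bool" where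
  "unital_star_hom p q p' q' \<phi> \<longleftrightarrow>
     (\<forall>f\<in>Zalg p q. \<phi> f \<in> Zalg p' q')
   \<and> (\<forall>f\<in>Zalg p q. \<forall>g\<in>Zalg p q. \<phi> (zadd f g) = zadd (\<phi> f) (\<phi> g))
   \<and> (\<forall>c. \<forall>f\<in>Zalg p q. \<phi> (zscale c f) = zscale c (\<phi> f))
   \<and> (\<forall>f\<in>Zalg p q. \<forall>g\<in>Zalg p q. \<phi> (zmult p q f g) = zmult p' q' (\<phi> f) (\<phi> g))
   \<and> (\<forall>f\<in>Zalg p q. \<phi> (zadj f) = zadj (\<phi> f))
   \<and> \<phi> (zunit p q) = zunit p' q'"

end

theory Submission
  imports Defs
begin

definition mm :: "'a set \<Rightarrow> ('a \<Rightarrow> 'a \<Rightarrow> complex) \<Rightarrow> ('a \<Rightarrow> 'a \<Rightarrow> complex) \<Rightarrow> 'a \<Rightarrow> 'a \<Rightarrow> complex" where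
  "mm I X Y = (\<lambda>x y. \<Sum>c\<in>I. X x c * Y c y)"

definition adjm :: "('a \<Rightarrow> 'a \<Rightarrow> complex) \<Rightarrow> 'a \<Rightarrow> 'a \<Rightarrow> complex" where
  "adjm X = (\<lambda>x y. cnj (X y x))"

definition conjm :: "'a set \<Rightarrow> ('a \<Rightarrow> 'a \<Rightarrow> complex) \<Rightarrow> ('a \<Rightarrow> 'a \<Rightarrow> complex) \<Rightarrow> 'a \<Rightarrow> 'a \<Rightarrow> complex" where
  "conjm I U X = mm I (mm I U X) (adjm U)"

lemma if0_mult1: "(if P then x else 0) * (y::complex) = (if P then x * y else 0)" by simp
lemma if0_mult2: "(y::complex) * (if P then x else 0) = (if P then y * x else 0)" by simp
lemma cnj_if0: "cnj (if P then x else 0) = (if P then cnj x else 0)" by simp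

lemma mm_assoc: "finite I \<Longrightarrow> mm I (mm I X Y) Z = mm I X (mm I Y Z)"
  unfolding mm_def
proof (rule ext, rule ext)
  fix a b
  have "(\<Sum>c\<in>I. (\<Sum>d\<in>I. X a d * Y d c) * Z c b) = (\<Sum>c\<in>I. \<Sum>d\<in>I. X a d * Y d c * Z c b)"
    by (simp add: sum_distrib_right)
  also have "\<dots> = (\<Sum>d\<in>I. \<Sum>c\<in>I. X a d * Y d c * Z c b)" by (rule sum.swap)
  also have "\<dots> = (\<Sum>d\<in>I. X a d * (\<Sum>c\<in>I. Y d c * Z c b))"
    by (simp add: sum_distrib_left mult.assoc)
  finally show "(\<Sum>c\<in>I. (\<Sum>d\<in>I. X a d * Y d c) * Z c b) = (\<Sum>d\<in>I. X a d * (\<Sum>c\<in>I. Y d c * Z c b))" .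
qed

lemma mm_cancel:
  assumes "finite I" "\<forall>c\<in>I. \<forall>e\<in>I. mm I A B c e = (if c = e then 1 else 0)" "c \<in> I"
  shows "mm I A (mm I B Z) c b = Z c b"
proof -
  have "mm I A (mm I B Z) c b = mm I (mm I A B) Z c b" using mm_assoc[OF assms(1)] by metis
  also have "\<dots> = (\<Sum>e\<in>I. (if c = e then 1 else 0) * Z e b)"
    unfolding mm_def using assms(2,3) by (intro sum.cong) (auto simp: mm_def)
  also have "\<dots> = Z c b" using assms by (simp add: if0_mult1 sum.delta sum.delta')
  finally show ?thesis .
qed

lemma adjm_mm: "adjm (mm I X Y) = mm I (adjm Y) (adjm X)"
  unfolding adjm_def mm_def by (auto simp: mult.commute intro!: ext)

lemma adjm_adjm[simp]: "adjm (adjm X) = X"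
  unfolding adjm_def by simp

lemma conj_adj: "finite I \<Longrightarrow> conjm I U (adjm X) = adjm (conjm I U X)"
  unfolding conjm_def by (simp add: adjm_mm mm_assoc)

lemma conj_mult:
  assumes "finite I" "\<forall>c\<in>I. \<forall>e\<in>I. mm I (adjm U) U c e = (if c = e then 1 else 0)"
  shows "conjm I U (mm I X Y) = mm I (conjm I U X) (conjm I U Y)"
proof -
  have "mm I (conjm I U X) (conjm I U Y) = mm I (mm I U X) (mm I (adjm U) (mm I U (mm I Y (adjm U))))"
    unfolding conjm_def using assms(1) by (simp add: mm_assoc)
  also have "\<dots> = mm I (mm I U X) (mm I Y (adjm U))"
    unfolding mm_def[of I "mm I U X"] using mm_cancel[OF assms] by (intro ext sum.cong) auto
  also have "\<dots> = conjm I U (mm I X Y)"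
    unfolding conjm_def using assms(1) by (simp add: mm_assoc)
  finally show ?thesis by simp
qed

lemma conj_cong:
  assumes "\<forall>c\<in>I. \<forall>d\<in>I. X c d = X' c d"
  shows "conjm I U X x y = conjm I U X' x y"
  unfolding conjm_def mm_def using assms by (intro sum.cong refl arg_cong2[where f="(*)"]) auto

lemma conj_add: "conjm I U (\<lambda>x y. X x y + Y x y) x y = conjm I U X x y + conjm I U Y x y"
  unfolding conjm_def mm_def by (simp add: ring_distribs sum.distrib)

lemma conj_scale: "conjm I U (\<lambda>x y. c * X x y) x y = c * conjm I U X x y"
  unfolding conjm_def mm_def by (simp add: ring_distribs sum_distrib_left sum_distrib_right mult_ac)

lemma conj_unit:
  assumes "finite I" "\<forall>c\<in>I. \<forall>e\<in>I. mm I U (adjm U) c e = (if c = e then 1 else 0)" "x \<in> I" "y \<in> I"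
  shows "conjm I U (\<lambda>a b. if a = b then 1 else 0) x y = (if x = y then 1 else 0)"
proof -
  have "conjm I U (\<lambda>a b. if a = b then 1 else 0) x y = (\<Sum>c\<in>I. U x c * adjm U c y)"
    unfolding conjm_def mm_def
  proof (intro sum.cong refl)
    fix c assume c: "c \<in> I"
    have "(\<Sum>d\<in>I. U x d * (if d = c then 1 else 0)) = U x c"
      using c assms(1) by (simp add: if_distrib sum.delta cong: if_cong)
    then show "(\<Sum>d\<in>I. U x d * (if d = c then 1 else 0)) * adjm U c y = U x c * adjm U c y" by simp
  qed
  also have "\<dots> = mm I U (adjm U) x y" by (simp add: mm_def)
  finally show ?thesis using assms by simp
qed


definition Umat :: "complex \<Rightarrow> complex \<Rightarrow> ('a \<Rightarrow> 'a) \<Rightarrow> 'a \<Rightarrow> 'a \<Rightarrow> complex" where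
  "Umat al be sw x y = (if y = x then al else 0) + (if y = sw x then be else 0)"

lemma Umat_unitary:
  assumes "finite I" "\<forall>x\<in>I. sw x \<in> I" "\<forall>x. sw (sw x) = x"
    and "cnj al * al + cnj be * be = 1" "cnj al * be + cnj be * al = 0"
    and "c \<in> I" "e \<in> I"
  shows "mm I (adjm (Umat al be sw)) (Umat al be sw) c e = (if c = e then 1 else 0)"
    and "mm I (Umat al be sw) (adjm (Umat al be sw)) c e = (if c = e then 1 else 0)"
proof -
  have H1: "al * cnj al + (al * cnj be + (be * cnj al + be * cnj be)) = 1"
    using assms(4,5) by (simp add: algebra_simps) (metis add.assoc add.commute add.left_commute add_0_right)
  have H2: "x + (y + z) = (y::complex) + (x + z)" for x y z by (simp add: algebra_simps)
  have sweq: "\<And>x y. (sw x = y) = (x = sw y)" using assms(3) by metis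
  have U2: "\<And>d c. Umat al be sw d c = (if d = c then al else 0) + (if d = sw c then be else 0)"
    unfolding Umat_def using sweq by auto
  have e1: "(\<Sum>d\<in>I. (if d = c then cnj al else 0) * (if d = e then al else 0)) = (if c = e then cnj al * al else 0)"
    using assms by (simp add: if0_mult1 sum.delta)
  show "mm I (adjm (Umat al be sw)) (Umat al be sw) c e = (if c = e then 1 else 0)"
    unfolding mm_def adjm_def U2 complex_cnj_add cnj_if0 ring_distribs sum.distrib if0_mult1 
    using assms sweq by (simp add: sum.delta) (auto simp: algebra_simps H1 H2)
  show "mm I (Umat al be sw) (adjm (Umat al be sw)) c e = (if c = e then 1 else 0)"
    unfolding mm_def adjm_def Umat_def complex_cnj_add cnj_if0 ring_distribs sum.distrib if0_mult1 
    using assms sweq by (simp add: sum.delta) (auto simp: algebra_simps H1 H2)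
qed

definition sst :: "nat \<Rightarrow> nat \<Rightarrow> nat \<Rightarrow> nat \<Rightarrow> nat" where
  "sst a n m i = (if i < a*n then (i div n)*n else a*n + ((i - a*n) div m)*m)"
definition ssz :: "nat \<Rightarrow> nat \<Rightarrow> nat \<Rightarrow> nat \<Rightarrow> nat" where
  "ssz a n m i = (if i < a*n then n else m)"
definition sps :: "nat \<Rightarrow> nat \<Rightarrow> nat \<Rightarrow> nat \<Rightarrow> nat" where
  "sps a n m i = i - sst a n m i"

lemma sst_le: "sst a n m i \<le> i"
proof -
  have h1: "(i div n) * n \<le> i" by (metis div_mult_mod_eq le_add1)
  have h2: "((i - a*n) div m) * m \<le> i - a*n" by (metis div_mult_mod_eq le_add1)
  show ?thesis
  proof (cases "i < a*n")
    case True then show ?thesis using h1 by (simp add: sst_def)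
  next
    case False
    then have "a*n + ((i - a*n) div m) * m \<le> i" using h2 by linarith
    then show ?thesis using False by (simp add: sst_def)
  qed
qed

lemma sst_lt: assumes "0 < n" "0 < m" shows "i < sst a n m i + ssz a n m i"
proof (cases "i < a*n")
  case True
  have "i < (i div n) * n + n" using assms
    by (metis add.commute div_mult_mod_eq mod_less_divisor nat_add_left_cancel_less)
  then show ?thesis using True by (simp add: sst_def ssz_def)
next
  case False
  have "i - a*n < ((i - a*n) div m) * m + m" using assms
    by (metis add.commute div_mult_mod_eq mod_less_divisor nat_add_left_cancel_less)
  then show ?thesis using False by (simp add: sst_def ssz_def)
qed

lemma sst_A: assumes "0 < n" shows "(sst a n m i < a*n) = (i < a*n)"
proof (cases "i < a*n")
  case True
  then have "i div n < a" using assms by (simp add: div_less_iff_less_mult)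
  then have "(i div n) * n < a * n" using assms by simp
  then show ?thesis using True by (simp add: sst_def)
qed (simp add: sst_def)

lemma ssz_sst: assumes "0 < n" shows "ssz a n m i = (if sst a n m i < a*n then n else m)"
  using sst_A[OF assms] by (simp add: ssz_def)

lemma sst_bound: assumes "0 < n" "0 < m" "i < a*n + b*m" shows "sst a n m i + ssz a n m i \<le> a*n + b*m"
proof (cases "i < a*n")
  case True
  then have "i div n < a" using assms by (simp add: div_less_iff_less_mult)
  then have "(i div n) * n + n \<le> a * n" using assms
    by (metis Suc_leI add.commute mult_Suc mult_le_mono1)
  then show ?thesis using True by (simp add: sst_def ssz_def)
next
  case False
  then have "(i - a*n) div m < b" using assms by (simp add: div_less_iff_less_mult)
  then have "((i - a*n) div m) * m + m \<le> b * m" using assms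
    by (metis Suc_leI add.commute mult_Suc mult_le_mono1)
  then show ?thesis using False by (simp add: sst_def ssz_def)
qed

lemma sst_shift: assumes "0 < n" "0 < m" "u < ssz a n m i" "i < a*n + b*m"
  shows "sst a n m (sst a n m i + u) = sst a n m i"
proof (cases "i < a*n")
  case True
  then have u: "u < n" using assms by (simp add: ssz_def)
  have bd: "sst a n m i + ssz a n m i \<le> a*n + b*m" by (rule sst_bound[OF assms(1,2,4)])
  have "i div n < a" using True assms by (simp add: div_less_iff_less_mult)
  then have "(i div n) * n + n \<le> a * n" using assms
    by (metis Suc_leI add.commute mult_Suc mult_le_mono1)
  then have lt: "(i div n)*n + u < a*n" using u by simp
  have "((i div n)*n + u) div n = i div n" using u assms by simp
  then show ?thesis using True lt by (simp add: sst_def)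
next
  case False
  then have u: "u < m" using assms by (simp add: ssz_def)
  have "(((i - a*n) div m)*m + u) div m = (i - a*n) div m" using u assms by simp
  then show ?thesis using False by (simp add: sst_def)
qed

lemma slot_set: assumes "0 < n" "0 < m" "i < a*n + b*m"
  shows "{i3. i3 < a*n + b*m \<and> sst a n m i3 = sst a n m i} = {sst a n m i ..< sst a n m i + ssz a n m i}"
proof (intro set_eqI iffI)
  fix x assume "x \<in> {i3. i3 < a*n + b*m \<and> sst a n m i3 = sst a n m i}"
  then have x: "x < a*n+b*m" "sst a n m x = sst a n m i" by auto
  then have "ssz a n m x = ssz a n m i" using ssz_sst[OF assms(1)] by metis
  then show "x \<in> {sst a n m i ..< sst a n m i + ssz a n m i}"
    using x sst_le[of a n m x] sst_lt[OF assms(1,2), where a=a and i=x] by auto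
next
  fix x assume "x \<in> {sst a n m i ..< sst a n m i + ssz a n m i}"
  then obtain u where u: "x = sst a n m i + u" "u < ssz a n m i"
    by (metis atLeastLessThan_iff le_add_diff_inverse nat_add_left_cancel_less)
  then show "x \<in> {i3. i3 < a*n + b*m \<and> sst a n m i3 = sst a n m i}"
    using sst_shift[OF assms(1,2) u(2) assms(3)] sst_bound[OF assms] by auto
qed

lemma rect_image: "{s1..<s1+(d1::nat)} \<times> {s2..<s2+(d2::nat)} = (\<lambda>w. (s1 + fst w, s2 + snd w)) ` ({..<d1} \<times> {..<d2})"
proof (intro set_eqI iffI)
  fix z assume "z \<in> {s1..<s1+d1} \<times> {s2..<s2+d2}"
  then have "z = (s1 + fst (fst z - s1, snd z - s2), s2 + snd (fst z - s1, snd z - s2))"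
    "(fst z - s1, snd z - s2) \<in> {..<d1} \<times> {..<d2}" by auto
  then show "z \<in> (\<lambda>w. (s1 + fst w, s2 + snd w)) ` ({..<d1} \<times> {..<d2})" by blast
qed auto

locale gridc = fixes n m a b a2 b2 :: nat assumes n0: "0 < n" and m0: "0 < m"
begin

definition blkeq :: "nat \<times> nat \<Rightarrow> nat \<times> nat \<Rightarrow> bool" where
  "blkeq x y = (sst a n m (fst x) = sst a n m (fst y) \<and> sst a2 n m (snd x) = sst a2 n m (snd y))"
definition loc :: "nat \<times> nat \<Rightarrow> nat \<times> nat" where
  "loc x = (sps a n m (fst x), sps a2 n m (snd x))"
definition kr :: "nat \<times> nat \<Rightarrow> bool" where "kr x = (fst x < a*n)"
definition kc :: "nat \<times> nat \<Rightarrow> bool" where "kc x = (snd x < a2*n)"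
definition lsz :: "bool \<Rightarrow> nat" where "lsz k = (if k then n else m)"
definition G :: "(bool \<Rightarrow> bool \<Rightarrow> nat\<times>nat \<Rightarrow> nat\<times>nat \<Rightarrow> complex) \<Rightarrow> tmat" where
  "G B x y = (if blkeq x y then B (kr x) (kc x) (loc x) (loc y) else 0)"

abbreviation "grid \<equiv> tidx (a*n+b*m) (a2*n+b2*m)"
abbreviation "LS x \<equiv> tidx (lsz (kr x)) (lsz (kc x))"

lemma ssz_lsz1: "ssz a n m i = lsz (i < a*n)" by (simp add: ssz_def lsz_def)
lemma ssz_lsz2: "ssz a2 n m i = lsz (i < a2*n)" by (simp add: ssz_def lsz_def)

lemma blkeq_kr: "blkeq x y \<Longrightarrow> kr x = kr y \<and> kc x = kc y"
  unfolding blkeq_def kr_def kc_def using sst_A[OF n0] by metis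

lemma loc_in: "loc x \<in> LS x"
  using sst_lt[OF n0 m0, where a=a and i="fst x"] sst_lt[OF n0 m0, where a=a2 and i="snd x"]
    sst_le[of a n m "fst x"] sst_le[of a2 n m "snd x"]
  unfolding loc_def sps_def tidx_def kr_def kc_def ssz_lsz1 ssz_lsz2 by (auto simp: less_diff_conv2 add.commute)

lemma blkeq_loc: "blkeq x y \<Longrightarrow> loc x = loc y \<Longrightarrow> x = y"
proof (rule prod_eqI)
  assume b: "blkeq x y" and l: "loc x = loc y"
  have s: "sst a n m (fst x) = sst a n m (fst y)" "sst a2 n m (snd x) = sst a2 n m (snd y)"
    "fst x - sst a n m (fst x) = fst y - sst a n m (fst y)"
    "snd x - sst a2 n m (snd x) = snd y - sst a2 n m (snd y)"
    using b l by (auto simp: blkeq_def loc_def sps_def)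
  show "fst x = fst y" using s(1,3) sst_le[of a n m "fst x"] sst_le[of a n m "fst y"] by linarith
  show "snd x = snd y" using s(2,4) sst_le[of a2 n m "snd x"] sst_le[of a2 n m "snd y"] by linarith
qed

definition shft :: "nat \<times> nat \<Rightarrow> nat \<times> nat \<Rightarrow> nat \<times> nat" where
  "shft x w = (sst a n m (fst x) + fst w, sst a2 n m (snd x) + snd w)"

lemma shft_props:
  assumes "x \<in> grid" "w \<in> LS x"
  shows "blkeq x (shft x w)" "loc (shft x w) = w" "kr (shft x w) = kr x" "kc (shft x w) = kc x"
proof -
  have 1: "sst a n m (sst a n m (fst x) + fst w) = sst a n m (fst x)"
    using assms by (intro sst_shift[OF n0 m0, where b=b]) (auto simp: tidx_def ssz_lsz1 kr_def)
  have 2: "sst a2 n m (sst a2 n m (snd x) + snd w) = sst a2 n m (snd x)"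
    using assms by (intro sst_shift[OF n0 m0, where b=b2]) (auto simp: tidx_def ssz_lsz2 kc_def)
  show b: "blkeq x (shft x w)" using 1 2 by (simp add: blkeq_def shft_def)
  show "loc (shft x w) = w" using 1 2 by (simp add: loc_def shft_def sps_def)
  show "kr (shft x w) = kr x" "kc (shft x w) = kc x" using blkeq_kr[OF b] by auto
qed

lemma blk_sum:
  assumes "x \<in> grid"
  shows "(\<Sum>z\<in>grid. if blkeq x z then H z else 0) = (\<Sum>w\<in>LS x. H (shft x w))"
proof -
  have "(\<Sum>z\<in>grid. if blkeq x z then H z else 0) = (\<Sum>z\<in>{z\<in>grid. blkeq x z}. H z)"
    by (simp add: sum.inter_filter tidx_def)
  also have "{z\<in>grid. blkeq x z} =
      {i3. i3 < a*n+b*m \<and> sst a n m i3 = sst a n m (fst x)} \<times> {j3. j3 < a2*n+b2*m \<and> sst a2 n m j3 = sst a2 n m (snd x)}"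
    unfolding blkeq_def tidx_def by auto
  also have "\<dots> = {sst a n m (fst x) ..< sst a n m (fst x) + ssz a n m (fst x)} \<times>
       {sst a2 n m (snd x) ..< sst a2 n m (snd x) + ssz a2 n m (snd x)}"
    using assms slot_set[OF n0 m0, of "fst x" a b] slot_set[OF n0 m0, of "snd x" a2 b2]
    by (auto simp: tidx_def mem_Times_iff)
  also have "\<dots> = shft x ` (LS x)"
    unfolding rect_image shft_def tidx_def ssz_lsz1 ssz_lsz2 kr_def kc_def by simp
  also have "sum H (shft x ` (LS x)) = (\<Sum>w\<in>LS x. H (shft x w))"
    by (rule sum.reindex_cong[where l="shft x"]) (auto simp: inj_on_def shft_def)
  finally show ?thesis .
qed

lemma G_mult:
  assumes h: "\<forall>k k'. \<forall>u\<in>tidx (lsz k) (lsz k'). \<forall>v\<in>tidx (lsz k) (lsz k').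
      Bh k k' u v = mm (tidx (lsz k) (lsz k')) (Bf k k') (Bg k k') u v"
    and x: "x \<in> grid" and y: "y \<in> grid"
  shows "G Bh x y = mm grid (G Bf) (G Bg) x y"
proof -
  have "mm grid (G Bf) (G Bg) x y = (\<Sum>z\<in>grid. if blkeq x z then
      (if blkeq x y then Bf (kr x) (kc x) (loc x) (loc z) * Bg (kr x) (kc x) (loc z) (loc y) else 0) else 0)"
    unfolding mm_def
  proof (intro sum.cong refl)
    fix z
    show "G Bf x z * G Bg z y = (if blkeq x z then
      (if blkeq x y then Bf (kr x) (kc x) (loc x) (loc z) * Bg (kr x) (kc x) (loc z) (loc y) else 0) else 0)"
    proof (cases "blkeq x z")
      case True
      then have "blkeq z y = blkeq x y" "kr z = kr x" "kc z = kc x"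
        using blkeq_kr[OF True] unfolding blkeq_def by auto
      then show ?thesis using True by (simp add: G_def)
    qed (simp add: G_def)
  qed
  also have "\<dots> = G Bh x y"
  proof (cases "blkeq x y")
    case True
    have "(\<Sum>z\<in>grid. if blkeq x z then
      (if blkeq x y then Bf (kr x) (kc x) (loc x) (loc z) * Bg (kr x) (kc x) (loc z) (loc y) else 0) else 0)
      = (\<Sum>w\<in>LS x. Bf (kr x) (kc x) (loc x) w * Bg (kr x) (kc x) w (loc y))"
      using True blk_sum[OF x, of "\<lambda>z. Bf (kr x) (kc x) (loc x) (loc z) * Bg (kr x) (kc x) (loc z) (loc y)"]
        shft_props(2)[OF x] by (simp only: if_True cong: sum.cong)
    also have "\<dots> = Bh (kr x) (kc x) (loc x) (loc y)"
      using h loc_in[of x] loc_in[of y] blkeq_kr[OF True] by (simp add: mm_def)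
    finally show ?thesis using True by (simp add: G_def)
  qed (simp add: G_def cong: if_cong)
  finally show ?thesis by simp
qed

lemma G_unit:
  assumes h: "\<forall>k k'. \<forall>u\<in>tidx (lsz k) (lsz k'). \<forall>v\<in>tidx (lsz k) (lsz k'). Bf k k' u v = (if u = v then 1 else 0)"
  shows "G Bf x y = (if x = y then 1 else 0)"
proof (cases "blkeq x y")
  case True
  then show ?thesis using h loc_in[of x] loc_in[of y] blkeq_kr[OF True] blkeq_loc[OF True]
    by (auto simp: G_def)
qed (auto simp: G_def blkeq_def)

lemma G_adj:
  assumes "\<And>k k' u v. Bg k k' u v = cnj (Bf k k' v u)"
  shows "G Bg x y = cnj (G Bf y x)"
proof (cases "blkeq x y")
  case True
  then have "blkeq y x" by (auto simp: blkeq_def)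
  then show ?thesis using True assms blkeq_kr[OF True] by (simp add: G_def)
qed (auto simp: G_def blkeq_def)

lemma G_add: "G (\<lambda>k k' u v. Bf k k' u v + Bg k k' u v) x y = G Bf x y + G Bg x y"
  by (simp add: G_def)

lemma G_scale: "G (\<lambda>k k' u v. c * Bf k k' u v) x y = c * G Bf x y"
  by (simp add: G_def)

lemma G_left:
  assumes h: "\<forall>k k' p p2 q q2. p < lsz k \<longrightarrow> p2 < lsz k \<longrightarrow> q < lsz k' \<longrightarrow> q2 < lsz k' \<longrightarrow>
       Bf k k' (p,q) (p2,q2) = R k p p2 * (if q = q2 then 1 else 0)"
  shows "in_left (a*n+b*m) (a2*n+b2*m) (G Bf)"
  unfolding in_left_def
proof (intro exI allI impI)
  fix i j i' j'
  assume r: "i < a*n+b*m" "j < a2*n+b2*m" "i' < a*n+b*m" "j' < a2*n+b2*m"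
  let ?R0 = "\<lambda>i i'. if sst a n m i = sst a n m i' then R (i < a*n) (sps a n m i) (sps a n m i') else 0"
  show "G Bf (i,j) (i',j') = ?R0 i i' * (if j = j' then 1 else 0)"
  proof (cases "blkeq (i,j) (i',j')")
    case True
    have l1: "loc (i,j) \<in> LS (i,j)" "loc (i',j') \<in> LS (i,j)"
      using loc_in[of "(i,j)"] loc_in[of "(i',j')"] blkeq_kr[OF True] by auto
    have "(sps a2 n m j = sps a2 n m j') = (j = j')"
      using True sst_le[of a2 n m j] sst_le[of a2 n m j'] unfolding blkeq_def sps_def by auto
    then show ?thesis using True h l1
      by (auto simp: G_def loc_def kr_def tidx_def blkeq_def)
  next
    case False
    then show ?thesis by (auto simp: G_def blkeq_def)
  qed
qed

lemma G_right:
  assumes h: "\<forall>k k' p p2 q q2. p < lsz k \<longrightarrow> p2 < lsz k \<longrightarrow> q < lsz k' \<longrightarrow> q2 < lsz k' \<longrightarrow>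
       Bf k k' (p,q) (p2,q2) = (if p = p2 then 1 else 0) * R k' q q2"
  shows "in_right (a*n+b*m) (a2*n+b2*m) (G Bf)"
  unfolding in_right_def
proof (intro exI allI impI)
  fix i j i' j'
  assume r: "i < a*n+b*m" "j < a2*n+b2*m" "i' < a*n+b*m" "j' < a2*n+b2*m"
  let ?R0 = "\<lambda>j j'. if sst a2 n m j = sst a2 n m j' then R (j < a2*n) (sps a2 n m j) (sps a2 n m j') else 0"
  show "G Bf (i,j) (i',j') = (if i = i' then 1 else 0) * ?R0 j j'"
  proof (cases "blkeq (i,j) (i',j')")
    case True
    have l1: "loc (i,j) \<in> LS (i,j)" "loc (i',j') \<in> LS (i,j)"
      using loc_in[of "(i,j)"] loc_in[of "(i',j')"] blkeq_kr[OF True] by auto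
    have "(sps a n m i = sps a n m i') = (i = i')"
      using True sst_le[of a n m i] sst_le[of a n m i'] unfolding blkeq_def sps_def by auto
    then show ?thesis using True h l1
      by (auto simp: G_def loc_def kc_def tidx_def blkeq_def)
  next
    case False
    then show ?thesis by (auto simp: G_def blkeq_def)
  qed
qed

end

lemma finite_tidx[simp]: "finite (tidx p q)" by (simp add: tidx_def)

lemma left_form:
  assumes "in_left n m F" "p < n" "c1 < n" "c2 < m" "d2 < m" "0 < m"
  shows "F (p,d2) (c1,c2) = F (p,0) (c1,0) * (if d2 = c2 then 1 else 0)"
proof -
  obtain M where M: "\<forall>i j i' j'. i < n \<longrightarrow> j < m \<longrightarrow> i' < n \<longrightarrow> j' < m \<longrightarrow>
      F (i,j) (i',j') = M i i' * (if j = j' then 1 else 0)" using assms(1) unfolding in_left_def by blast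
  show ?thesis using M assms by simp
qed

lemma right_form:
  assumes "in_right n m F" "d1 < n" "c1 < n" "c2 < m" "q < m" "0 < n"
  shows "F (d1,q) (c1,c2) = (if d1 = c1 then 1 else 0) * F (0,q) (0,c2)"
proof -
  obtain M where M: "\<forall>i j i' j'. i < n \<longrightarrow> j < m \<longrightarrow> i' < n \<longrightarrow> j' < m \<longrightarrow>
      F (i,j) (i',j') = (if i = i' then 1 else 0) * M j j'" using assms(1) unfolding in_right_def by blast
  show ?thesis using M assms by simp
qed

definition sw :: "nat \<times> nat \<Rightarrow> nat \<times> nat" where "sw x = (snd x, fst x)"
definition al :: "real \<Rightarrow> complex" where "al t = complex_of_real (cos (pi*t/2))"
definition be :: "real \<Rightarrow> complex" where "be t = \<i> * complex_of_real (sin (pi*t/2))"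
definition Ut :: "real \<Rightarrow> nat \<times> nat \<Rightarrow> nat \<times> nat \<Rightarrow> complex" where "Ut t = Umat (al t) (be t) sw"
definition tens :: "(nat \<Rightarrow> nat \<Rightarrow> complex) \<Rightarrow> nat \<times> nat \<Rightarrow> nat \<times> nat \<Rightarrow> complex" where
  "tens M x y = M (fst x) (fst y) * (if snd x = snd y then 1 else 0)"

lemma al_be: "cnj (al t) * al t + cnj (be t) * be t = 1" "cnj (al t) * be t + cnj (be t) * al t = 0"
proof -
  have "cnj (al t) * al t + cnj (be t) * be t =
     complex_of_real (cos (pi*t/2)) * complex_of_real (cos (pi*t/2)) + complex_of_real (sin (pi*t/2)) * complex_of_real (sin (pi*t/2))"
    unfolding al_def be_def by (simp add: algebra_simps)
  also have "\<dots> = complex_of_real (cos (pi*t/2) * cos (pi*t/2) + sin (pi*t/2) * sin (pi*t/2))"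
    by (simp only: of_real_mult of_real_add)
  also have "\<dots> = 1" by (simp only: sin_cos_squared_add3 of_real_1)
  finally show "cnj (al t) * al t + cnj (be t) * be t = 1" .
  show "cnj (al t) * be t + cnj (be t) * al t = 0"
    unfolding al_def be_def by (simp add: algebra_simps)
qed

lemma Ut_unitary:
  assumes "c \<in> tidx d d" "e \<in> tidx d d"
  shows "mm (tidx d d) (adjm (Ut t)) (Ut t) c e = (if c = e then 1 else 0)"
    and "mm (tidx d d) (Ut t) (adjm (Ut t)) c e = (if c = e then 1 else 0)"
  unfolding Ut_def
  by (rule Umat_unitary[OF _ _ _ al_be assms]; auto simp: tidx_def sw_def)+

lemma Ut0: "Ut 0 = (\<lambda>x y. if x = y then 1 else 0)"
  unfolding Ut_def Umat_def al_def be_def by (intro ext) auto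

lemma Ut1: "Ut 1 = (\<lambda>x y. if y = sw x then \<i> else 0)"
  unfolding Ut_def Umat_def al_def be_def by (intro ext) auto

lemma conj_id:
  assumes "finite I" "u \<in> I" "v \<in> I"
  shows "conjm I (\<lambda>x y. if x = y then 1 else 0) X u v = X u v"
  unfolding conjm_def mm_def adjm_def using assms
  by (simp add: if0_mult1 if0_mult2 cnj_if0 sum.delta sum.delta' cong: if_cong)

lemma conj_sw:
  assumes "finite I" "u \<in> I" "v \<in> I" "sw u \<in> I" "sw v \<in> I"
  shows "conjm I (\<lambda>x y. if y = sw x then \<i> else 0) X u v = X (sw u) (sw v)"
  unfolding conjm_def mm_def adjm_def using assms
  by (simp add: if0_mult1 if0_mult2 cnj_if0 sum.delta sum.delta' cong: if_cong) (simp add: algebra_simps)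

lemma cont_Ut: "continuous_on S (\<lambda>t. Ut t x y)"
  unfolding Ut_def Umat_def al_def be_def
  by (cases "y = x"; cases "y = sw x"; simp; intro continuous_intros; simp)

lemma cont_conj: "continuous_on S (\<lambda>t. conjm I (Ut t) X u v)"
  unfolding conjm_def mm_def adjm_def
  by (intro continuous_intros cont_Ut)

context gridc
begin

definition M0 :: "tfun \<Rightarrow> nat \<Rightarrow> nat \<Rightarrow> complex" where "M0 f p p2 = f 0 (p,0) (p2,0)"
definition M1 :: "tfun \<Rightarrow> nat \<Rightarrow> nat \<Rightarrow> complex" where "M1 f q q2 = f 1 (0,q) (0,q2)"

definition Blk :: "real \<Rightarrow> tfun \<Rightarrow> bool \<Rightarrow> bool \<Rightarrow> nat\<times>nat \<Rightarrow> nat\<times>nat \<Rightarrow> complex" where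
  "Blk t f k k' u v = (if k then (if k' then conjm (tidx n n) (Ut t) (tens (M0 f)) u v else f t u v)
     else (if k' then f (1-t) (sw u) (sw v) else conjm (tidx m m) (Ut t) (tens (M1 f)) u v))"

lemma Blk_add: "Blk t (zadd f g) = (\<lambda>k k' u v. Blk t f k k' u v + Blk t g k k' u v)"
proof (intro ext)
  fix k k' u v
  have "tens (M0 (zadd f g)) = (\<lambda>x y. tens (M0 f) x y + tens (M0 g) x y)"
    "tens (M1 (zadd f g)) = (\<lambda>x y. tens (M1 f) x y + tens (M1 g) x y)"
    by (intro ext; simp add: tens_def M0_def M1_def zadd_def ring_distribs)+
  then show "Blk t (zadd f g) k k' u v = Blk t f k k' u v + Blk t g k k' u v"
    by (simp add: Blk_def conj_add zadd_def)
qed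

lemma Blk_scale: "Blk t (zscale c f) = (\<lambda>k k' u v. c * Blk t f k k' u v)"
proof (intro ext)
  fix k k' u v
  have "tens (M0 (zscale c f)) = (\<lambda>x y. c * tens (M0 f) x y)"
    "tens (M1 (zscale c f)) = (\<lambda>x y. c * tens (M1 f) x y)"
    by (intro ext; simp add: tens_def M0_def M1_def zscale_def)+
  then show "Blk t (zscale c f) k k' u v = c * Blk t f k k' u v"
    by (simp add: Blk_def conj_scale zscale_def)
qed

lemma Blk_adj: "Blk t (zadj f) = (\<lambda>k k' u v. cnj (Blk t f k k' v u))"
proof (intro ext)
  fix k k' u v
  have "tens (M0 (zadj f)) = adjm (tens (M0 f))" "tens (M1 (zadj f)) = adjm (tens (M1 f))"
    by (intro ext; simp add: tens_def M0_def M1_def zadj_def adjm_def)+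
  then show "Blk t (zadj f) k k' u v = cnj (Blk t f k k' v u)"
    by (simp add: Blk_def conj_adj zadj_def) (simp add: adjm_def)
qed

end

context gridc
begin

lemma Zalg_D: assumes "f \<in> Zalg n m"
  shows "in_left n m (f 0)" "in_right n m (f 1)" "\<And>a b. continuous_on {0..1} (\<lambda>t. f t a b)"
  using assms unfolding Zalg_def by auto

lemma tens_M0_mult:
  assumes f: "f \<in> Zalg n m" and g: "g \<in> Zalg n m" and c: "c \<in> tidx n n" and d: "d \<in> tidx n n"
  shows "tens (M0 (zmult n m f g)) c d = mm (tidx n n) (tens (M0 f)) (tens (M0 g)) c d"
proof -
  obtain p q p2 q2 where cd: "c = (p,q)" "d = (p2,q2)" by fastforce
  have r: "p < n" "q < n" "p2 < n" "q2 < n" using c d cd by (auto simp: tidx_def)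
  have "M0 (zmult n m f g) p p2 = (\<Sum>e1\<in>{..<n}. \<Sum>e2\<in>{..<m}. f 0 (p,0) (e1,e2) * g 0 (e1,e2) (p2,0))"
    unfolding M0_def zmult_def tidx_def by (simp add: sum.cartesian_product)
  also have "\<dots> = (\<Sum>e1\<in>{..<n}. \<Sum>e2\<in>{..<m}. (if e2 = 0 then M0 f p e1 * M0 g e1 p2 else 0))"
  proof (intro sum.cong refl)
    fix e1 e2 assume e: "e1 \<in> {..<n}" "e2 \<in> {..<m}"
    have "f 0 (p,0) (e1,e2) = M0 f p e1 * (if 0 = e2 then 1 else 0)"
      using left_form[OF Zalg_D(1)[OF f] r(1), of e1 e2 0] e m0 by (simp add: M0_def)
    moreover have "g 0 (e1,e2) (p2,0) = M0 g e1 p2 * (if e2 = 0 then 1 else 0)"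
      using left_form[OF Zalg_D(1)[OF g], of e1 p2 0 e2] e m0 r by (simp add: M0_def)
    ultimately show "f 0 (p,0) (e1,e2) * g 0 (e1,e2) (p2,0) = (if e2 = 0 then M0 f p e1 * M0 g e1 p2 else 0)"
      by auto
  qed
  also have "\<dots> = (\<Sum>e1\<in>{..<n}. M0 f p e1 * M0 g e1 p2)"
    using m0 by (simp add: sum.delta')
  finally have 1: "M0 (zmult n m f g) p p2 = (\<Sum>e1\<in>{..<n}. M0 f p e1 * M0 g e1 p2)" .
  have "mm (tidx n n) (tens (M0 f)) (tens (M0 g)) c d =
      (\<Sum>e1\<in>{..<n}. \<Sum>e2\<in>{..<n}. M0 f p e1 * (if q = e2 then 1 else 0) * (M0 g e1 p2 * (if e2 = q2 then 1 else 0)))"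
    unfolding mm_def tidx_def cd tens_def by (simp add: sum.cartesian_product split_def)
  also have "\<dots> = (\<Sum>e1\<in>{..<n}. M0 f p e1 * M0 g e1 p2 * (if q = q2 then 1 else 0))"
  proof (intro sum.cong refl)
    fix e1
    have "(\<Sum>e2\<in>{..<n}. M0 f p e1 * (if q = e2 then 1 else 0) * (M0 g e1 p2 * (if e2 = q2 then 1 else 0)))
       = (\<Sum>e2\<in>{..<n}. if q = e2 then M0 f p e1 * (M0 g e1 p2 * (if e2 = q2 then 1 else 0)) else 0)"
      by (intro sum.cong refl) auto
    also have "\<dots> = M0 f p e1 * M0 g e1 p2 * (if q = q2 then 1 else 0)"
      using r by (simp add: sum.delta)
    finally show "(\<Sum>e2\<in>{..<n}. M0 f p e1 * (if q = e2 then 1 else 0) * (M0 g e1 p2 * (if e2 = q2 then 1 else 0)))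
       = M0 f p e1 * M0 g e1 p2 * (if q = q2 then 1 else 0)" .
  qed
  also have "\<dots> = (\<Sum>e1\<in>{..<n}. M0 f p e1 * M0 g e1 p2) * (if q = q2 then 1 else 0)"
    by (simp add: sum_distrib_right)
  finally show ?thesis using 1 cd by (simp add: tens_def)
qed

lemma tens_M1_mult:
  assumes f: "f \<in> Zalg n m" and g: "g \<in> Zalg n m" and c: "c \<in> tidx m m" and d: "d \<in> tidx m m"
  shows "tens (M1 (zmult n m f g)) c d = mm (tidx m m) (tens (M1 f)) (tens (M1 g)) c d"
proof -
  obtain p q p2 q2 where cd: "c = (p,q)" "d = (p2,q2)" by fastforce
  have r: "p < m" "q < m" "p2 < m" "q2 < m" using c d cd by (auto simp: tidx_def)
  have "M1 (zmult n m f g) p p2 = (\<Sum>e1\<in>{..<n}. \<Sum>e2\<in>{..<m}. f 1 (0,p) (e1,e2) * g 1 (e1,e2) (0,p2))"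
    unfolding M1_def zmult_def tidx_def by (simp add: sum.cartesian_product)
  also have "\<dots> = (\<Sum>e1\<in>{..<n}. \<Sum>e2\<in>{..<m}. (if e1 = 0 then M1 f p e2 * M1 g e2 p2 else 0))"
  proof (intro sum.cong refl)
    fix e1 e2 assume e: "e1 \<in> {..<n}" "e2 \<in> {..<m}"
    have "f 1 (0,p) (e1,e2) = (if 0 = e1 then 1 else 0) * M1 f p e2"
      using right_form[OF Zalg_D(2)[OF f], of 0 e1 e2 p] e n0 r by (simp add: M1_def)
    moreover have "g 1 (e1,e2) (0,p2) = (if e1 = 0 then 1 else 0) * M1 g e2 p2"
      using right_form[OF Zalg_D(2)[OF g], of e1 0 p2 e2] e n0 r by (simp add: M1_def)
    ultimately show "f 1 (0,p) (e1,e2) * g 1 (e1,e2) (0,p2) = (if e1 = 0 then M1 f p e2 * M1 g e2 p2 else 0)"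
      by auto
  qed
  also have "\<dots> = (\<Sum>e1\<in>{..<n}. if e1 = 0 then (\<Sum>e2\<in>{..<m}. M1 f p e2 * M1 g e2 p2) else 0)"
    by (intro sum.cong refl) auto
  also have "\<dots> = (\<Sum>e2\<in>{..<m}. M1 f p e2 * M1 g e2 p2)"
    using n0 by (simp add: sum.delta')
  finally have 1: "M1 (zmult n m f g) p p2 = (\<Sum>e2\<in>{..<m}. M1 f p e2 * M1 g e2 p2)" .
  have "mm (tidx m m) (tens (M1 f)) (tens (M1 g)) c d =
      (\<Sum>e1\<in>{..<m}. \<Sum>e2\<in>{..<m}. M1 f p e1 * (if q = e2 then 1 else 0) * (M1 g e1 p2 * (if e2 = q2 then 1 else 0)))"
    unfolding mm_def tidx_def cd tens_def by (simp add: sum.cartesian_product split_def)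
  also have "\<dots> = (\<Sum>e1\<in>{..<m}. M1 f p e1 * M1 g e1 p2 * (if q = q2 then 1 else 0))"
  proof (intro sum.cong refl)
    fix e1
    have "(\<Sum>e2\<in>{..<m}. M1 f p e1 * (if q = e2 then 1 else 0) * (M1 g e1 p2 * (if e2 = q2 then 1 else 0)))
       = (\<Sum>e2\<in>{..<m}. if q = e2 then M1 f p e1 * (M1 g e1 p2 * (if e2 = q2 then 1 else 0)) else 0)"
      by (intro sum.cong refl) auto
    also have "\<dots> = M1 f p e1 * M1 g e1 p2 * (if q = q2 then 1 else 0)"
      using r by (simp add: sum.delta)
    finally show "(\<Sum>e2\<in>{..<m}. M1 f p e1 * (if q = e2 then 1 else 0) * (M1 g e1 p2 * (if e2 = q2 then 1 else 0)))
       = M1 f p e1 * M1 g e1 p2 * (if q = q2 then 1 else 0)" .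
  qed
  also have "\<dots> = (\<Sum>e1\<in>{..<m}. M1 f p e1 * M1 g e1 p2) * (if q = q2 then 1 else 0)"
    by (simp add: sum_distrib_right)
  finally show ?thesis using 1 cd by (simp add: tens_def)
qed

end

context gridc
begin

lemma sw_pair: "sw (x1,x2) = (x2,x1)" by (simp add: sw_def)

lemma Blk_TT: "Blk t f True True = conjm (tidx n n) (Ut t) (tens (M0 f))"
  by (intro ext) (simp add: Blk_def)
lemma Blk_FF: "Blk t f False False = conjm (tidx m m) (Ut t) (tens (M1 f))"
  by (intro ext) (simp add: Blk_def)

lemma Blk_mult:
  assumes f: "f \<in> Zalg n m" and g: "g \<in> Zalg n m"
  shows "\<forall>k k'. \<forall>u\<in>tidx (lsz k) (lsz k'). \<forall>v\<in>tidx (lsz k) (lsz k').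
      Blk t (zmult n m f g) k k' u v = mm (tidx (lsz k) (lsz k')) (Blk t f k k') (Blk t g k k') u v"
proof (intro allI ballI)
  fix k k' u v
  assume u: "u \<in> tidx (lsz k) (lsz k')" and v: "v \<in> tidx (lsz k) (lsz k')"
  show "Blk t (zmult n m f g) k k' u v = mm (tidx (lsz k) (lsz k')) (Blk t f k k') (Blk t g k k') u v"
  proof (cases k; cases k')
    assume k: k k'
    have "Blk t (zmult n m f g) k k' u v = conjm (tidx n n) (Ut t) (mm (tidx n n) (tens (M0 f)) (tens (M0 g))) u v"
      using k tens_M0_mult[OF f g] by (simp add: Blk_TT) (rule conj_cong, auto)
    also have "\<dots> = mm (tidx n n) (Blk t f True True) (Blk t g True True) u v"
      unfolding Blk_TT by (subst conj_mult) (simp_all add: Ut_unitary)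
    finally show ?thesis using k by (simp add: lsz_def)
  next
    assume k: "\<not> k" "\<not> k'"
    have "Blk t (zmult n m f g) k k' u v = conjm (tidx m m) (Ut t) (mm (tidx m m) (tens (M1 f)) (tens (M1 g))) u v"
      using k tens_M1_mult[OF f g] by (simp add: Blk_FF) (rule conj_cong, auto)
    also have "\<dots> = mm (tidx m m) (Blk t f False False) (Blk t g False False) u v"
      unfolding Blk_FF by (subst conj_mult) (simp_all add: Ut_unitary)
    finally show ?thesis using k by (simp add: lsz_def)
  next
    assume k: k "\<not> k'"
    then show ?thesis by (simp add: Blk_def lsz_def zmult_def mm_def)
  next
    assume k: "\<not> k" k'
    have "(\<Sum>c\<in>tidx n m. f (1-t) (sw u) c * g (1-t) c (sw v)) = (\<Sum>w\<in>tidx m n. f (1-t) (sw u) (sw w) * g (1-t) (sw w) (sw v))"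
      by (rule sum.reindex_bij_witness[of _ sw sw]) (auto simp: sw_def tidx_def)
    then show ?thesis using k by (simp add: Blk_def lsz_def zmult_def mm_def)
  qed
qed

lemma Blk_unit:
  assumes t: "t \<in> {0..1}"
  shows "\<forall>k k'. \<forall>u\<in>tidx (lsz k) (lsz k'). \<forall>v\<in>tidx (lsz k) (lsz k'). Blk t (zunit n m) k k' u v = (if u = v then 1 else 0)"
proof (intro allI ballI)
  fix k k' u v
  assume u: "u \<in> tidx (lsz k) (lsz k')" and v: "v \<in> tidx (lsz k) (lsz k')"
  show "Blk t (zunit n m) k k' u v = (if u = v then 1 else 0)"
  proof (cases k; cases k')
    assume k: k k'
    have "Blk t (zunit n m) k k' u v = conjm (tidx n n) (Ut t) (\<lambda>a b. if a = b then 1 else 0) u v"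
      using k m0 by (simp add: Blk_TT) (rule conj_cong, auto simp: tens_def M0_def zunit_def tidx_def)
    also have "\<dots> = (if u = v then 1 else 0)"
      using u v k by (intro conj_unit) (simp_all add: Ut_unitary lsz_def)
    finally show ?thesis .
  next
    assume k: "\<not> k" "\<not> k'"
    have "Blk t (zunit n m) k k' u v = conjm (tidx m m) (Ut t) (\<lambda>a b. if a = b then 1 else 0) u v"
      using k n0 by (simp add: Blk_FF) (rule conj_cong, auto simp: tens_def M1_def zunit_def tidx_def)
    also have "\<dots> = (if u = v then 1 else 0)"
      using u v k by (intro conj_unit) (simp_all add: Ut_unitary lsz_def)
    finally show ?thesis .
  next
    assume k: k "\<not> k'"
    then show ?thesis using u t by (simp add: Blk_def lsz_def zunit_def)
  next
    assume k: "\<not> k" k'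
    have "sw u \<in> tidx n m" "(sw u = sw v) = (u = v)" using u k by (auto simp: sw_def tidx_def lsz_def prod_eq_iff)
    then show ?thesis using k t by (simp add: Blk_def lsz_def zunit_def)
  qed
qed

lemma Blk0:
  assumes f: "f \<in> Zalg n m"
  shows "\<forall>k k' p p2 q q2. p < lsz k \<longrightarrow> p2 < lsz k \<longrightarrow> q < lsz k' \<longrightarrow> q2 < lsz k' \<longrightarrow>
       Blk 0 f k k' (p,q) (p2,q2) = (if k then M0 f else M1 f) p p2 * (if q = q2 then 1 else 0)"
proof (intro allI impI)
  fix k k' p p2 q q2
  assume r: "p < lsz k" "p2 < lsz k" "q < lsz k'" "q2 < lsz k'"
  show "Blk 0 f k k' (p,q) (p2,q2) = (if k then M0 f else M1 f) p p2 * (if q = q2 then 1 else 0)"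
  proof (cases k; cases k')
    assume k: k k'
    then show ?thesis using r by (simp add: Blk_TT Ut0 conj_id tidx_def lsz_def tens_def)
  next
    assume k: "\<not> k" "\<not> k'"
    then show ?thesis using r by (simp add: Blk_FF Ut0 conj_id tidx_def lsz_def tens_def)
  next
    assume k: k "\<not> k'"
    then show ?thesis using r left_form[OF Zalg_D(1)[OF f], of p p2 q2 q] m0
      by (simp add: Blk_def lsz_def M0_def)
  next
    assume k: "\<not> k" k'
    then show ?thesis using r right_form[OF Zalg_D(2)[OF f], of q q2 p2 p] n0
      by (simp add: Blk_def lsz_def M1_def sw_def)
  qed
qed

lemma Blk1:
  assumes f: "f \<in> Zalg n m"
  shows "\<forall>k k' p p2 q q2. p < lsz k \<longrightarrow> p2 < lsz k \<longrightarrow> q < lsz k' \<longrightarrow> q2 < lsz k' \<longrightarrow>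
       Blk 1 f k k' (p,q) (p2,q2) = (if p = p2 then 1 else 0) * (if k' then M0 f else M1 f) q q2"
proof (intro allI impI)
  fix k k' p p2 q q2
  assume r: "p < lsz k" "p2 < lsz k" "q < lsz k'" "q2 < lsz k'"
  show "Blk 1 f k k' (p,q) (p2,q2) = (if p = p2 then 1 else 0) * (if k' then M0 f else M1 f) q q2"
  proof (cases k; cases k')
    assume k: k k'
    then show ?thesis using r conj_sw[of "tidx n n" "(p,q)" "(p2,q2)" "tens (M0 f)"] by (simp add: Blk_TT Ut1 tidx_def lsz_def sw_pair tens_def)
  next
    assume k: "\<not> k" "\<not> k'"
    then show ?thesis using r conj_sw[of "tidx m m" "(p,q)" "(p2,q2)" "tens (M1 f)"] by (simp add: Blk_FF Ut1 tidx_def lsz_def sw_pair tens_def)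
  next
    assume k: k "\<not> k'"
    then show ?thesis using r right_form[OF Zalg_D(2)[OF f], of p p2 q2 q] n0
      by (simp add: Blk_def lsz_def M1_def)
  next
    assume k: "\<not> k" k'
    then show ?thesis using r left_form[OF Zalg_D(1)[OF f], of q q2 p2 p] m0
      by (simp add: Blk_def lsz_def M0_def sw_def)
  qed
qed

lemma Blk_cont:
  assumes f: "f \<in> Zalg n m"
  shows "continuous_on {0..1} (\<lambda>t. Blk t f k k' u v)"
proof (cases k; cases k')
  assume k: k k'
  then show ?thesis by (simp add: Blk_TT cont_conj)
next
  assume k: "\<not> k" "\<not> k'"
  then show ?thesis by (simp add: Blk_FF cont_conj)
next
  assume k: k "\<not> k'"
  then show ?thesis using Zalg_D(3)[OF f] by (simp add: Blk_def)
next
  assume k: "\<not> k" k'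
  have "continuous_on {0..1} (\<lambda>t. f (1 - t) (sw u) (sw v))"
    by (rule continuous_on_compose2[OF Zalg_D(3)[OF f], where f="\<lambda>t. 1 - t"])
       (auto intro: continuous_intros)
  then show ?thesis using k by (simp add: Blk_def)
qed

end

context gridc
begin

definition phi :: "tfun \<Rightarrow> tfun" where
  "phi f = (\<lambda>t x y. if t \<in> {0..1} \<and> x \<in> grid \<and> y \<in> grid then G (Blk t f) x y else 0)"

lemma phi_Zalg:
  assumes f: "f \<in> Zalg n m"
  shows "phi f \<in> Zalg (a*n+b*m) (a2*n+b2*m)"
  unfolding Zalg_def mem_Collect_eq
proof (intro conjI allI impI)
  fix t show "is_tmat (a*n+b*m) (a2*n+b2*m) (phi f t)"
    unfolding is_tmat_def phi_def by auto
next
  fix t :: real assume "t \<notin> {0..1}" then show "phi f t = (\<lambda>_ _. 0)"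
    unfolding phi_def by auto
next
  fix x y
  show "continuous_on {0..1} (\<lambda>t. phi f t x y)"
  proof (cases "x \<in> grid \<and> y \<in> grid")
    case True
    have "continuous_on {0..1} (\<lambda>t. G (Blk t f) x y)"
    proof (cases "blkeq x y")
      case True then show ?thesis by (simp add: G_def Blk_cont[OF f])
    qed (simp add: G_def)
    then show ?thesis by (rule continuous_on_cong[THEN iffD1, rotated 2]) (use True in \<open>auto simp: phi_def\<close>)
  next
    case False
    then have "(\<lambda>t. phi f t x y) = (\<lambda>t. 0)" by (auto simp: phi_def)
    then show ?thesis by (metis continuous_on_const)
  qed
next
  have L: "in_left (a*n+b*m) (a2*n+b2*m) (G (Blk 0 f))" by (rule G_left[OF Blk0[OF f]])
  then obtain M where M: "\<forall>i j i' j'. i < a*n+b*m \<longrightarrow> j < a2*n+b2*m \<longrightarrow> i' < a*n+b*m \<longrightarrow> j' < a2*n+b2*m \<longrightarrow>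
      G (Blk 0 f) (i,j) (i',j') = M i i' * (if j = j' then 1 else 0)" unfolding in_left_def by blast
  show "in_left (a*n+b*m) (a2*n+b2*m) (phi f 0)"
    unfolding in_left_def
    by (rule exI[of _ M]) (use M in \<open>auto simp: phi_def tidx_def\<close>)
next
  have L: "in_right (a*n+b*m) (a2*n+b2*m) (G (Blk 1 f))" by (rule G_right[OF Blk1[OF f]])
  then obtain M where M: "\<forall>i j i' j'. i < a*n+b*m \<longrightarrow> j < a2*n+b2*m \<longrightarrow> i' < a*n+b*m \<longrightarrow> j' < a2*n+b2*m \<longrightarrow>
      G (Blk 1 f) (i,j) (i',j') = (if i = i' then 1 else 0) * M j j'" unfolding in_right_def by blast
  show "in_right (a*n+b*m) (a2*n+b2*m) (phi f 1)"
    unfolding in_right_def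
    by (rule exI[of _ M]) (use M in \<open>auto simp: phi_def tidx_def\<close>)
qed

lemma phi_hom: "unital_star_hom n m (a*n+b*m) (a2*n+b2*m) phi"
  unfolding unital_star_hom_def
proof (intro conjI ballI allI)
  fix f assume "f \<in> Zalg n m" then show "phi f \<in> Zalg (a*n+b*m) (a2*n+b2*m)" by (rule phi_Zalg)
next
  fix f g
  have "phi (zadd f g) t x y = phi f t x y + phi g t x y" for t x y
    by (simp add: phi_def Blk_add G_add)
  then show "phi (zadd f g) = zadd (phi f) (phi g)" by (intro ext) (simp add: zadd_def)
next
  fix c f
  have "phi (zscale c f) t x y = c * phi f t x y" for t x y
    by (simp add: phi_def Blk_scale G_scale)
  then show "phi (zscale c f) = zscale c (phi f)" by (intro ext) (simp add: zscale_def)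
next
  fix f
  have "phi (zadj f) t x y = cnj (phi f t y x)" for t x y
    using G_adj[of "\<lambda>k k' u v. cnj (Blk t f k k' v u)" "Blk t f"] by (simp add: phi_def Blk_adj)
  then show "phi (zadj f) = zadj (phi f)" by (intro ext) (simp add: zadj_def)
next
  fix f g assume f: "f \<in> Zalg n m" and g: "g \<in> Zalg n m"
  have "phi (zmult n m f g) t x y = (\<Sum>z\<in>grid. phi f t x z * phi g t z y)" for t x y
  proof (cases "t \<in> {0..1} \<and> x \<in> grid \<and> y \<in> grid")
    case True
    then have "phi (zmult n m f g) t x y = mm grid (G (Blk t f)) (G (Blk t g)) x y"
      using G_mult[OF Blk_mult[OF f g]] by (simp add: phi_def)
    also have "\<dots> = (\<Sum>z\<in>grid. phi f t x z * phi g t z y)"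
      unfolding mm_def using True by (intro sum.cong refl) (simp add: phi_def)
    finally show ?thesis .
  next
    case False
    then have "phi f t x z * phi g t z y = 0" for z by (auto simp: phi_def)
    then have "(\<Sum>z\<in>grid. phi f t x z * phi g t z y) = 0" by (intro sum.neutral) blast
    moreover have "phi (zmult n m f g) t x y = 0" using False unfolding phi_def by auto
    ultimately show ?thesis by simp
  qed
  then show "phi (zmult n m f g) = zmult (a*n+b*m) (a2*n+b2*m) (phi f) (phi g)"
    by (intro ext) (simp add: zmult_def)
next
  have "phi (zunit n m) t x y = zunit (a*n+b*m) (a2*n+b2*m) t x y" for t x y
  proof (cases "t \<in> {0..1} \<and> x \<in> grid \<and> y \<in> grid")
    case True
    then show ?thesis using G_unit[OF Blk_unit] by (simp add: phi_def zunit_def)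
  next
    case False
    then show ?thesis by (auto simp: phi_def zunit_def)
  qed
  then show "phi (zunit n m) = zunit (a*n+b*m) (a2*n+b2*m)" by (intro ext) simp
qed

end

lemma decomp:
  assumes "0 < (n::nat)" "n*n \<le> N"
  shows "\<exists>a b. N = a*n + b*(n+1)"
proof -
  define q r where "q = N div n" and "r = N mod n"
  have N: "N = q*n + r" unfolding q_def r_def by simp
  have "r < n" using assms unfolding r_def by simp
  moreover have "n \<le> q"
  proof -
    have "(n*n) div n \<le> N div n" using assms(2) by (rule div_le_mono)
    then show ?thesis using assms(1) unfolding q_def by simp
  qed
  ultimately have "N = (q - r)*n + r*(n+1)" using N by (simp add: algebra_simps diff_mult_distrib)
  then show ?thesis by blast
qed

theorem lemma5p10:
  fixes n :: nat
  assumes "n \<ge> 1"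
  shows "\<exists>k::nat. \<exists>\<phi>. unital_star_hom n (n+1) (2^k) (2^k+1) \<phi>"
proof -
  have n0: "0 < n" using assms by simp
  have "n*n < 2^(n*n)" by (rule less_exp)
  then obtain a b where ab: "2^(n*n) = a*n + b*(n+1)" using decomp[OF n0] by (meson less_imp_le)
  obtain a2 b2 where ab2: "2^(n*n) + 1 = a2*n + b2*(n+1)"
    using decomp[OF n0, of "2^(n*n)+1"] \<open>n*n < 2^(n*n)\<close> by auto
  interpret gridc n "n+1" a b a2 b2 by unfold_locales (use n0 in auto)
  have "unital_star_hom n (n+1) (a*n+b*(n+1)) (a2*n+b2*(n+1)) phi" by (rule phi_hom)
  then show ?thesis unfolding ab[symmetric] ab2[symmetric] by blast
qed


end
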